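(* Let $\Gamma_1,\Gamma_2\le\mathbb{Z}^D$ be subgroups and for $i=1,2$ let $\mathbf X_i=(X_i,\Sigma_i,\mu_i,T_i)$ be $\mathbb{Z}^D$-systems with $T_i^\gamma=\mathrm{id}$ for all $\gamma\in\Gamma_i$. Then for any joining $\pi_i:\mathbf Y=(Y,\Phi,\nu,S)\to\mathbf X_i$ ($i=1,2$), the $\sigma$-algebras $\pi_1^{-1}(\Sigma_1)$ and $\pi_2^{-1}(\Sigma_2)$ are relatively independent under $\nu$ over $\pi_1^{-1}(\Sigma_1^{T_1\upharpoonright(\Gamma_1+\Gamma_2)})$ and $\pi_2^{-1}(\Sigma_2^{T_2\upharpoonright(\Gamma_1+\Gamma_2)})$; i.e. for all $A_i\in\Sigma_i$, \[\nu(\pi_1^{-1}A_1\cap\pi_2^{-1}A_2)=\int_Y \big(\mathsf E_{\mu_1}(1_{A_1}\mid\Sigma_1^{T_1\upharpoonright(\Gamma_1+\Gamma_2)})\circ\pi_1\big)\big(\mathsf E_{\mu_2}(1_{A_2}\mid\Sigma_2^{T_2\upharpoonright(\Gamma_1+\Gamma_2)})\circ\pi_2\big)\,d\nu.\]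
   Context: For a subgroup $\Lambda\le\mathbb{Z}^D$, $\Sigma^{T\upharpoonright\Lambda}=\{A\in\Sigma:\mu(A\triangle T^\gamma A)=0\ \forall\gamma\in\Lambda\}$. A joining of $\mathbf X_1,\mathbf X_2$ is a $\mathbb{Z}^D$-system $\mathbf Y$ with factor maps $\pi_i:\mathbf Y\to\mathbf X_i$ (measurable, measure-pushing, equivariant) whose pulled-back $\sigma$-algebras together generate $\Phi$ mod null sets. *)

theory Defs
  imports "HOL-Probability.Probability"
begin

text \<open>Subgroups of Z^D, with Z^D rendered as the type int^'d ('d finite, D = CARD('d)).\<close>
definition add_subgroup :: "(int^'d) set \<Rightarrow> bool" where
  "add_subgroup G \<longleftrightarrow> 0 \<in> G \<and> (\<forall>a\<in>G. \<forall>b\<in>G. a + b \<in> G) \<and> (\<forall>a\<in>G. - a \<in> G)"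

definition subgroup_sum :: "(int^'d) set \<Rightarrow> (int^'d) set \<Rightarrow> (int^'d) set" where
  "subgroup_sum G H = {a + b | a b. a \<in> G \<and> b \<in> H}"

definition zd_system :: "'a measure \<Rightarrow> (int^'d \<Rightarrow> 'a \<Rightarrow> 'a) \<Rightarrow> bool" where
  "zd_system M T \<longleftrightarrow> prob_space M
     \<and> (\<forall>g. T g \<in> measurable M M \<and> distr M M (T g) = M)
     \<and> (\<forall>x\<in>space M. T 0 x = x)
     \<and> (\<forall>g h. \<forall>x\<in>space M. T (g + h) x = T g (T h x))"

definition inv_sets :: "'a measure \<Rightarrow> (int^'d \<Rightarrow> 'a \<Rightarrow> 'a) \<Rightarrow> (int^'d) set \<Rightarrow> 'a set set" where
  "inv_sets M T L = {A \<in> sets M. \<forall>g\<in>L.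
      measure M ((A - (T g -` A \<inter> space M)) \<union> ((T g -` A \<inter> space M) - A)) = 0}"

definition inv_alg :: "'a measure \<Rightarrow> (int^'d \<Rightarrow> 'a \<Rightarrow> 'a) \<Rightarrow> (int^'d) set \<Rightarrow> 'a measure" where
  "inv_alg M T L = sigma (space M) (inv_sets M T L)"

definition factor_map :: "'b measure \<Rightarrow> (int^'d \<Rightarrow> 'b \<Rightarrow> 'b) \<Rightarrow> 'a measure \<Rightarrow> (int^'d \<Rightarrow> 'a \<Rightarrow> 'a)
    \<Rightarrow> ('b \<Rightarrow> 'a) \<Rightarrow> bool" where
  "factor_map N S M T p \<longleftrightarrow> p \<in> measurable N M \<and> distr N M p = M
     \<and> (\<forall>g. AE y in N. p (S g y) = T g (p y))"

definition joining :: "'b measure \<Rightarrow> (int^'d \<Rightarrow> 'b \<Rightarrow> 'b)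
    \<Rightarrow> 'a measure \<Rightarrow> (int^'d \<Rightarrow> 'a \<Rightarrow> 'a) \<Rightarrow> ('b \<Rightarrow> 'a)
    \<Rightarrow> 'c measure \<Rightarrow> (int^'d \<Rightarrow> 'c \<Rightarrow> 'c) \<Rightarrow> ('b \<Rightarrow> 'c) \<Rightarrow> bool" where
  "joining N S M1 T1 p1 M2 T2 p2 \<longleftrightarrow> zd_system N S
     \<and> factor_map N S M1 T1 p1 \<and> factor_map N S M2 T2 p2
     \<and> (\<forall>B\<in>sets N. \<exists>C\<in>sigma_sets (space N)
            ({p1 -` A \<inter> space N | A. A \<in> sets M1} \<union> {p2 -` A \<inter> space N | A. A \<in> sets M2}).
          measure N ((B - C) \<union> (C - B)) = 0)"

end

theory Submission
  imports Defs
begin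

lemma inv_alg_props:
  assumes "prob_space M"
  shows "space (inv_alg M T L) = space M"
    and "sets (inv_alg M T L) = sigma_sets (space M) (inv_sets M T L)"
    and "inv_sets M T L \<subseteq> sets (inv_alg M T L)"
    and "sigma_finite_subalgebra M (inv_alg M T L)"
proof -
  have sub: "inv_sets M T L \<subseteq> Pow (space M)"
    unfolding inv_sets_def using sets.sets_into_space by blast
  show sp: "space (inv_alg M T L) = space M" unfolding inv_alg_def using sub by simp
  show st: "sets (inv_alg M T L) = sigma_sets (space M) (inv_sets M T L)"
    unfolding inv_alg_def using sub by simp
  show "inv_sets M T L \<subseteq> sets (inv_alg M T L)" unfolding st by auto
  have "sets (inv_alg M T L) \<subseteq> sets M"
    unfolding st by (rule sets.sigma_sets_subset) (auto simp: inv_sets_def)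
  then have "subalgebra M (inv_alg M T L)" unfolding subalgebra_def using sp by simp
  then have "finite_measure_subalgebra M (inv_alg M T L)"
    using assms unfolding finite_measure_subalgebra_def finite_measure_subalgebra_axioms_def
    by (simp add: prob_space.finite_measure)
  then show "sigma_finite_subalgebra M (inv_alg M T L)"
    by (rule finite_measure_subalgebra_is_sigma_finite)
qed


lemma key:
  fixes N :: "'b measure" and S :: "int^'d::finite \<Rightarrow> 'b \<Rightarrow> 'b"
    and MA :: "'a measure" and TA :: "int^'d \<Rightarrow> 'a \<Rightarrow> 'a" and pa :: "'b \<Rightarrow> 'a"
    and MB :: "'c measure" and TB :: "int^'d \<Rightarrow> 'c \<Rightarrow> 'c" and pb :: "'b \<Rightarrow> 'c"
    and GA GB :: "(int^'d) set" and w :: "'a \<Rightarrow> real"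
  assumes zN: "zd_system N S" and zB: "zd_system MB TB"
    and fa: "factor_map N S MA TA pa" and fb: "factor_map N S MB TB pb"
    and sA: "add_subgroup GA"
    and idA: "\<forall>g\<in>GA. \<forall>x\<in>space MA. TA g x = x" and idB: "\<forall>g\<in>GB. \<forall>x\<in>space MB. TB g x = x"
    and wm[measurable]: "w \<in> borel_measurable MA" and wpos: "\<And>x. 0 \<le> w x" and wi: "integrable MA w"
    and B[measurable]: "B \<in> sets MB"
  shows "(\<integral>y. w (pa y) * indicator B (pb y) \<partial>N) =
    (\<integral>y. w (pa y) * real_cond_exp MB (inv_alg MB TB (subgroup_sum GA GB)) (indicator B) (pb y) \<partial>N)"
proof -
  define F where "F = inv_alg MB TB (subgroup_sum GA GB)"
  have pam[measurable]: "pa \<in> measurable N MA" and dA: "distr N MA pa = MA"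
    and eqA: "\<And>g. AE y in N. pa (S g y) = TA g (pa y)"
    using fa unfolding factor_map_def by auto
  have pbm[measurable]: "pb \<in> measurable N MB" and dB: "distr N MB pb = MB"
    and eqB: "\<And>g. AE y in N. pb (S g y) = TB g (pb y)"
    using fb unfolding factor_map_def by auto
  have N: "prob_space N" and Sm[measurable]: "\<And>g. S g \<in> measurable N N"
    and Sd: "\<And>g. distr N N (S g) = N"
    using zN unfolding zd_system_def by auto
  have PB: "prob_space MB" and TBm[measurable]: "\<And>g. TB g \<in> measurable MB MB"
    and TBd: "\<And>g. distr MB MB (TB g) = MB"
    and TB0: "\<And>x. x \<in> space MB \<Longrightarrow> TB 0 x = x"
    and TBadd: "\<And>g h x. x \<in> space MB \<Longrightarrow> TB (g + h) x = TB g (TB h x)"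
    using zB unfolding zd_system_def by auto
  interpret N: prob_space N by (rule N)
  interpret MB: prob_space MB by (rule PB)
  have Fp: "space F = space MB" "inv_sets MB TB (subgroup_sum GA GB) \<subseteq> sets F"
    "sigma_finite_subalgebra MB F"
    using inv_alg_props[OF PB] unfolding F_def by blast+
  interpret SF: sigma_finite_subalgebra MB F by (rule Fp(3))
  define W where "W = density N (\<lambda>y. ennreal (w (pa y)))"
  define lam where "lam = distr W MB pb"
  have sW: "sets W = sets N" "space W = space N" unfolding W_def by auto
  have pbW[measurable]: "pb \<in> measurable W MB"
    using measurable_cong_sets[OF sW(1) refl] pbm by blast
  have slam: "sets lam = sets MB" unfolding lam_def by simp
  have intA: "(\<integral>\<^sup>+ x. ennreal (w x) \<partial>MA) < \<infinity>"
    using wi wpos unfolding integrable_iff_bounded by simp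
  have "emeasure lam (space lam) = emeasure W (space W)"
    using measurable_space[OF pbm] unfolding lam_def
    by (subst emeasure_distr) (auto simp: sW intro!: arg_cong[where f="emeasure W"])
  also have "\<dots> = (\<integral>\<^sup>+ y. ennreal (w (pa y)) \<partial>N)"
    unfolding W_def by (simp add: emeasure_density)
  also have "\<dots> = (\<integral>\<^sup>+ x. ennreal (w x) \<partial>MA)"
    by (subst dA[symmetric]) (simp add: nn_integral_distr)
  finally have finlam: "finite_measure lam"
    using intA by (intro finite_measureI) simp
  have ac: "absolutely_continuous MB lam"
    unfolding absolutely_continuous_def
  proof
    fix C assume C: "C \<in> null_sets MB"
    then have Cs[measurable]: "C \<in> sets MB" by auto
    have "emeasure N (pb -` C \<inter> space N) = 0"
      using C dB by (metis emeasure_distr null_setsD1 pbm Cs)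
    then have "pb -` C \<inter> space N \<in> null_sets N" by (auto intro: null_setsI)
    then have "pb -` C \<inter> space N \<in> null_sets W"
      using absolutely_continuousI_density[of "\<lambda>y. ennreal (w (pa y))" N]
      unfolding W_def absolutely_continuous_def by auto
    then show "C \<in> null_sets lam"
      unfolding lam_def by (auto simp: null_sets_distr_iff sW)
  qed
  obtain D where Dm[measurable]: "D \<in> borel_measurable MB"
    and DRN: "AE x in MB. RN_deriv MB lam x = ennreal (D x)" and Dpos: "\<And>x. 0 \<le> D x"
    using MB.real_RN_deriv[OF finlam ac slam] by metis
  have lamD: "density MB (\<lambda>x. ennreal (D x)) = lam"
  proof -
    have "density MB (\<lambda>x. ennreal (D x)) = density MB (RN_deriv MB lam)"
      using DRN by (intro density_cong) auto
    also have "\<dots> = lam" using MB.density_RN_deriv[OF ac slam] .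
    finally show ?thesis .
  qed
  have transfer: "(\<integral>y. w (pa y) * k (pb y) \<partial>N) = (\<integral>x. D x * k x \<partial>MB)"
    if km[measurable]: "k \<in> borel_measurable MB" for k
  proof -
    have "(\<integral>y. w (pa y) * k (pb y) \<partial>N) = integral\<^sup>L W (\<lambda>y. k (pb y))"
      unfolding W_def by (subst integral_density) (auto simp: wpos)
    also have "\<dots> = integral\<^sup>L lam k"
      unfolding lam_def by (subst integral_distr) auto
    also have "\<dots> = (\<integral>x. D x * k x \<partial>MB)"
      unfolding lamD[symmetric] by (subst integral_density) (auto simp: Dpos)
    finally show ?thesis .
  qed
  have laminv: "distr lam MB (TB a) = lam" if a: "a \<in> GA" for a
  proof -
    have WS: "distr W N (S a) = W"
    proof -
      have dW: "density N (\<lambda>y. ennreal (w (pa (S a y)))) = W"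
        unfolding W_def
      proof (rule density_cong)
        show "AE y in N. ennreal (w (pa (S a y))) = ennreal (w (pa y))"
          using eqA[of a] AE_space
        proof eventually_elim
          case (elim y)
          show ?case using idA a elim measurable_space[OF pam] by auto
        qed
      qed auto
      then have "W = distr (density N (\<lambda>y. ennreal (w (pa (S a y))))) N (S a)"
        using density_distr[where f="\<lambda>y. ennreal (w (pa y))" and M=N and N=N and X="S a"] Sd[of a]
        unfolding W_def by simp
      then show ?thesis using dW by simp
    qed
    have SW[measurable]: "S a \<in> measurable W N"
      using measurable_cong_sets[OF sW(1) refl] Sm by blast
    have AEW: "AE y in W. pb (S a y) = TB a (pb y)"
      unfolding W_def by (subst AE_density) (auto intro: AE_mp[OF eqB[of a]])
    have "distr lam MB (TB a) = distr W MB (\<lambda>y. TB a (pb y))"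
      unfolding lam_def by (subst distr_distr) (auto simp: comp_def)
    also have "\<dots> = distr W MB (\<lambda>y. pb (S a y))"
      by (rule distr_cong_AE) (auto intro: AE_mp[OF AEW])
    also have "\<dots> = distr (distr W N (S a)) MB pb"
      by (subst distr_distr) (auto simp: comp_def)
    also have "\<dots> = lam" unfolding WS lam_def ..
    finally show ?thesis .
  qed
  have Dinv: "AE x in MB. D (TB a x) = D x" if a: "a \<in> GA" for a
  proof -
    have ma: "- a \<in> GA" using sA a unfolding add_subgroup_def by auto
    have "density MB (\<lambda>x. ennreal (D (TB a x)))
        = density (distr MB MB (TB (-a))) (\<lambda>x. ennreal (D (TB a x)))" by (simp add: TBd)
    also have "\<dots> = distr (density MB (\<lambda>x. ennreal (D (TB a (TB (-a) x))))) MB (TB (-a))"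
      by (rule density_distr) auto
    also have "\<dots> = distr (density MB (\<lambda>x. ennreal (D x))) MB (TB (-a))"
    proof -
      have "density MB (\<lambda>x. ennreal (D (TB a (TB (-a) x)))) = density MB (\<lambda>x. ennreal (D x))"
      proof (rule density_cong)
        show "AE x in MB. ennreal (D (TB a (TB (-a) x))) = ennreal (D x)"
          using AE_space
        proof eventually_elim
          case (elim x)
          then have "TB a (TB (-a) x) = x" using TBadd[of x a "-a"] TB0[of x] by simp
          then show ?case by simp
        qed
      qed auto
      then show ?thesis by simp
    qed
    also have "\<dots> = density MB (\<lambda>x. ennreal (D x))"
      using lamD laminv[OF ma] by simp
    finally have "AE x in MB. ennreal (D (TB a x)) = ennreal (D x)"
      by (intro MB.density_unique) auto
    then show ?thesis by (rule AE_mp) (auto intro!: AE_I2 simp: Dpos)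
  qed
  have Dinv2: "AE x in MB. D (TB g x) = D x" if g: "g \<in> subgroup_sum GA GB" for g
  proof -
    obtain a b where ab: "g = a + b" "a \<in> GA" "b \<in> GB"
      using g unfolding subgroup_sum_def by auto
    show ?thesis using Dinv[OF ab(2)] AE_space
    proof eventually_elim
      case (elim x)
      then have "TB g x = TB a x" using ab TBadd[of x a b] idB by simp
      then show ?case using elim by simp
    qed
  qed
  have DF[measurable]: "D \<in> borel_measurable F"
    unfolding borel_measurable_iff_greater
  proof
    fix t
    define U where "U = {x \<in> space MB. t < D x}"
    have Us[measurable]: "U \<in> sets MB" unfolding U_def by measurable
    have "U \<in> inv_sets MB TB (subgroup_sum GA GB)"
      unfolding inv_sets_def
    proof (intro CollectI conjI ballI Us)
      fix g assume g: "g \<in> subgroup_sum GA GB"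
      define X where "X = (U - (TB g -` U \<inter> space MB)) \<union> ((TB g -` U \<inter> space MB) - U)"
      have Xs: "X \<in> sets MB" unfolding X_def
        using measurable_sets[OF TBm Us] Us by auto
      have "AE x in MB. x \<notin> X" using Dinv2[OF g] AE_space
      proof eventually_elim
        case (elim x)
        then show ?case unfolding X_def U_def using measurable_space[OF TBm[of g]] by auto
      qed
      then have "X \<in> null_sets MB" using AE_iff_null_sets[OF Xs] by simp
      then show "measure MB ((U - (TB g -` U \<inter> space MB)) \<union> ((TB g -` U \<inter> space MB) - U)) = 0"
        unfolding X_def[symmetric] by (simp add: measure_def null_setsD1)
    qed
    then show "{x \<in> space F. t < D x} \<in> sets F" using Fp U_def by auto
  qed
  have "(\<integral>\<^sup>+x. ennreal (D x) \<partial>MB) = emeasure lam (space lam)"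
    unfolding lamD[symmetric] by (simp add: emeasure_density)
  also have "\<dots> < \<infinity>" using finite_measure.emeasure_finite[OF finlam] by (simp add: less_top)
  finally have intD: "integrable MB D"
    unfolding integrable_iff_bounded using Dpos by simp
  have intDB: "integrable MB (\<lambda>x. D x * indicator B x)"
    using integrable_mult_indicator[OF B intD] by (simp add: mult.commute)
  have "(\<integral>y. w (pa y) * indicator B (pb y) \<partial>N) = (\<integral>x. D x * indicator B x \<partial>MB)"
    by (rule transfer) simp
  also have "\<dots> = (\<integral>x. D x * real_cond_exp MB F (indicator B) x \<partial>MB)"
    by (rule SF.real_cond_exp_intg(2)[symmetric]) (use intDB in auto)
  also have "\<dots> = (\<integral>y. w (pa y) * real_cond_exp MB F (indicator B) (pb y) \<partial>N)"
    by (rule transfer[symmetric]) simp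
  finally show ?thesis unfolding F_def .
qed

lemma subgroup_sum_comm: "subgroup_sum G H = subgroup_sum H G"
  unfolding subgroup_sum_def by (auto simp: add.commute; metis add.commute)

theorem lemma4:
  fixes G1 G2 :: "(int^'d::finite) set"
    and M1 :: "'a measure" and T1 :: "int^'d \<Rightarrow> 'a \<Rightarrow> 'a"
    and M2 :: "'c measure" and T2 :: "int^'d \<Rightarrow> 'c \<Rightarrow> 'c"
    and N :: "'b measure" and S :: "int^'d \<Rightarrow> 'b \<Rightarrow> 'b"
    and p1 :: "'b \<Rightarrow> 'a" and p2 :: "'b \<Rightarrow> 'c"
  assumes "add_subgroup G1" "add_subgroup G2"
    and "zd_system M1 T1" "zd_system M2 T2"
    and "\<forall>g\<in>G1. \<forall>x\<in>space M1. T1 g x = x" "\<forall>g\<in>G2. \<forall>x\<in>space M2. T2 g x = x"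
    and "joining N S M1 T1 p1 M2 T2 p2"
    and "A1 \<in> sets M1" "A2 \<in> sets M2"
  shows "measure N (p1 -` A1 \<inter> p2 -` A2 \<inter> space N) =
    (\<integral>y. real_cond_exp M1 (inv_alg M1 T1 (subgroup_sum G1 G2)) (indicator A1) (p1 y)
        * real_cond_exp M2 (inv_alg M2 T2 (subgroup_sum G1 G2)) (indicator A2) (p2 y) \<partial>N)"
proof -
  note sA = assms(1) and sB = assms(2) and z1 = assms(3) and z2 = assms(4)
    and id1 = assms(5) and id2 = assms(6)
  have A1[measurable]: "A1 \<in> sets M1" and A2[measurable]: "A2 \<in> sets M2" using assms by auto
  have zN: "zd_system N S" and f1: "factor_map N S M1 T1 p1" and f2: "factor_map N S M2 T2 p2"
    using assms(7) unfolding joining_def by auto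
  have p1m[measurable]: "p1 \<in> measurable N M1" and d1: "distr N M1 p1 = M1"
    using f1 unfolding factor_map_def by auto
  have p2m[measurable]: "p2 \<in> measurable N M2" and d2: "distr N M2 p2 = M2"
    using f2 unfolding factor_map_def by auto
  have P1: "prob_space M1" using z1 unfolding zd_system_def by auto
  have P2: "prob_space M2" using z2 unfolding zd_system_def by auto
  have PN: "prob_space N" using zN unfolding zd_system_def by auto
  interpret N: prob_space N by (rule PN)
  interpret M1: prob_space M1 by (rule P1)
  interpret M2: prob_space M2 by (rule P2)
  define E1 where "E1 = real_cond_exp M1 (inv_alg M1 T1 (subgroup_sum G1 G2)) (indicator A1)"
  define E2 where "E2 = real_cond_exp M2 (inv_alg M2 T2 (subgroup_sum G1 G2)) (indicator A2)"
  interpret SF2: sigma_finite_subalgebra M2 "inv_alg M2 T2 (subgroup_sum G1 G2)"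
    using inv_alg_props[OF P2] by blast
  have E1m[measurable]: "E1 \<in> borel_measurable M1" unfolding E1_def by simp
  have E2m[measurable]: "E2 \<in> borel_measurable M2" unfolding E2_def by simp
  have E2pos: "AE x in M2. 0 \<le> E2 x" unfolding E2_def
    by (rule SF2.real_cond_exp_pos) auto
  have E2posN: "AE y in N. 0 \<le> E2 (p2 y)"
  proof -
    have "AE x in distr N M2 p2. 0 \<le> E2 x" unfolding d2 by (rule E2pos)
    then show ?thesis by (subst (asm) AE_distr_iff) auto
  qed
  have intE2: "integrable M2 E2" unfolding E2_def
    by (rule SF2.real_cond_exp_int(1), rule integrable_real_indicator[OF A2])
      (simp add: M2.emeasure_finite less_top[symmetric])
  define w where "w = (\<lambda>x. max (E2 x) 0)"
  have step0: "measure N (p1 -` A1 \<inter> p2 -` A2 \<inter> space N) =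
      (\<integral>y. indicator A1 (p1 y) * indicator A2 (p2 y) \<partial>N)"
  proof -
    have "(\<integral>y. indicator A1 (p1 y) * indicator A2 (p2 y) \<partial>N) =
        (\<integral>y. (indicator (p1 -` A1 \<inter> p2 -` A2 \<inter> space N) y :: real) \<partial>N)"
      by (rule Bochner_Integration.integral_cong) (auto simp: indicator_def)
    also have "\<dots> = measure N (p1 -` A1 \<inter> p2 -` A2 \<inter> space N)"
      by (simp add: Int_absorb2 Int_assoc[symmetric])
    finally show ?thesis by simp
  qed
  have step1: "(\<integral>y. indicator A1 (p1 y) * indicator A2 (p2 y) \<partial>N) =
      (\<integral>y. indicator A1 (p1 y) * E2 (p2 y) \<partial>N)"
    unfolding E2_def
    by (rule key[OF zN z2 f1 f2 sA id1 id2]) (auto intro!: integrable_real_indicator simp: M1.emeasure_finite less_top[symmetric])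
  have wm[measurable]: "w \<in> borel_measurable M2" unfolding w_def by measurable
  have wpos: "\<And>x. 0 \<le> w x" unfolding w_def by simp
  have wi: "integrable M2 w" unfolding w_def by (rule integrable_max[OF intE2]) simp
  have step2': "(\<integral>y. w (p2 y) * indicator A1 (p1 y) \<partial>N) =
      (\<integral>y. w (p2 y) * real_cond_exp M1 (inv_alg M1 T1 (subgroup_sum G2 G1)) (indicator A1) (p1 y) \<partial>N)"
    by (rule key[OF zN z1 f2 f1 sB id2 id1 wm wpos wi A1])
  have step2: "(\<integral>y. w (p2 y) * indicator A1 (p1 y) \<partial>N) =
      (\<integral>y. w (p2 y) * E1 (p1 y) \<partial>N)"
    using step2' unfolding E1_def by (simp only: subgroup_sum_comm[of G2 G1])
  have e1: "AE y in N. indicator A1 (p1 y) * E2 (p2 y) = w (p2 y) * indicator A1 (p1 y)"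
    using E2posN by eventually_elim (simp add: w_def)
  have e2: "AE y in N. w (p2 y) * E1 (p1 y) = E1 (p1 y) * E2 (p2 y)"
    using E2posN by eventually_elim (simp add: w_def)
  have "(\<integral>y. indicator A1 (p1 y) * E2 (p2 y) \<partial>N) = (\<integral>y. w (p2 y) * indicator A1 (p1 y) \<partial>N)"
    by (rule integral_cong_AE[OF _ _ e1]) measurable
  moreover have "(\<integral>y. w (p2 y) * E1 (p1 y) \<partial>N) = (\<integral>y. E1 (p1 y) * E2 (p2 y) \<partial>N)"
    by (rule integral_cong_AE[OF _ _ e2]) measurable
  ultimately show ?thesis using step0 step1 step2 unfolding E1_def E2_def by simp
qed

end
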